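(* Let $r\ge 1$ be an integer, let $k_1,\dots,k_r$ be integers, and let $a,b>0$ with $ab\neq \pm 1$. Then for every integer $n\ge 0$, $$\mathbf{E}_{n}^{(k_1,\dots,k_r)}(a,b)=\sum_{i=0}^{n}\binom{n}{i} r^{n-i}(\ln a+\ln b)^i(\ln a)^{n-i}\,\mathbf{E}_{i}^{(k_1,\dots,k_r)} .$$
   Context: For integers $k_1,\dots,k_r$, the multi-polylogarithm is $Li_{(k_1,\dots,k_r)}(z)=\sum_{0<m_1<m_2<\dots<m_r}\frac{z^{m_r}}{m_1^{k_1}m_2^{k_2}\cdots m_r^{k_r}}$ (sum over integers). For $c>0$, $c^t:=e^{t\ln c}$. The Multi Poly-Euler polynomials $\mathbf{E}_n^{(k_1,\dots,k_r)}(x)$ are defined by $$\frac{2Li_{(k_1,\dots,k_r)}(1-e^{-t})}{(1+e^t)^r}e^{rxt}=\sum_{n=0}^{\infty}\mathbf{E}_{n}^{(k_1,\dots,k_r)}(x)\frac{t^n}{n!},$$ and the Multi Poly-Euler numbers are $\mathbf{E}_{n}^{(k_1,\dots,k_r)}:=\mathbf{E}_{n}^{(k_1,\dots,k_r)}(0)$. The generalized Multi Poly-Euler polynomials with parameters $a,b$ are defined by $$\frac{2Li_{(k_1,\dots,k_r)}(1-(ab)^{-t})}{(a^{-t}+b^t)^r}e^{rxt}=\sum_{n=0}^{\infty}\mathbf{E}_{n}^{(k_1,\dots,k_r)}(x;a,b)\frac{t^n}{n!},$$ and $\mathbf{E}_{n}^{(k_1,\dots,k_r)}(a,b):=\mathbf{E}_{n}^{(k_1,\dots,k_r)}(0;a,b)$.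 *)

theory Defs
  imports "HOL-Analysis.Analysis"
begin

definition mpl_index :: "nat \<Rightarrow> nat list set" where
  "mpl_index r = {ms. length ms = r \<and> sorted_wrt (<) ms \<and> (\<forall>m\<in>set ms. 0 < m)}"

definition multi_polylog :: "int list \<Rightarrow> real \<Rightarrow> real" where
  "multi_polylog ks z =
     infsum (\<lambda>ms. z ^ last ms / (\<Prod>i<length ks. real (ms ! i) powi (ks ! i)))
            (mpl_index (length ks))"

text \<open>Multi Poly-Euler polynomials: n-th Taylor coefficient (times n!) at t = 0.\<close>
definition multi_poly_euler_poly :: "int list \<Rightarrow> nat \<Rightarrow> real \<Rightarrow> real" where
  "multi_poly_euler_poly ks n x =
     (deriv ^^ n) (\<lambda>t. 2 * multi_polylog ks (1 - exp (- t)) / (1 + exp t) ^ length ks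
                        * exp (real (length ks) * x * t)) 0"

definition multi_poly_euler :: "int list \<Rightarrow> nat \<Rightarrow> real" where
  "multi_poly_euler ks n = multi_poly_euler_poly ks n 0"

definition gen_multi_poly_euler_poly :: "int list \<Rightarrow> nat \<Rightarrow> real \<Rightarrow> real \<Rightarrow> real \<Rightarrow> real" where
  "gen_multi_poly_euler_poly ks n x a b =
     (deriv ^^ n) (\<lambda>t. 2 * multi_polylog ks (1 - (a * b) powr (- t))
                        / (a powr (- t) + b powr t) ^ length ks
                        * exp (real (length ks) * x * t)) 0"

definition gen_multi_poly_euler :: "int list \<Rightarrow> nat \<Rightarrow> real \<Rightarrow> real \<Rightarrow> real" where
  "gen_multi_poly_euler ks n a b = gen_multi_poly_euler_poly ks n 0 a b"

end

theory Submission imports Defs "HOL-Complex_Analysis.Complex_Analysis"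
begin

lemma diffs_one_bound:
  "real (Suc n) ^ N \<le> (diffs ^^ N) (\<lambda>_. 1::real) n"
proof (induction N arbitrary: n)
  case 0 then show ?case by simp
next
  case (Suc N)
  have "real (Suc n) ^ Suc N = real (Suc n) * real (Suc n) ^ N" by simp
  also have "\<dots> \<le> real (Suc n) * real (Suc (Suc n)) ^ N"
    by (intro mult_left_mono power_mono) auto
  also have "\<dots> \<le> real (Suc n) * (diffs ^^ N) (\<lambda>_. 1::real) (Suc n)"
    by (intro mult_left_mono Suc.IH) auto
  also have "\<dots> = (diffs ^^ Suc N) (\<lambda>_. 1::real) n"
    by (simp only: funpow.simps o_apply diffs_def)
  finally show ?case .
qed

lemma diffs_one_summable:
  fixes x :: real
  assumes "\<bar>x\<bar> < 1"
  shows "summable (\<lambda>n. (diffs ^^ N) (\<lambda>_. 1::real) n * x ^ n)"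
  using assms
proof (induction N arbitrary: x)
  case 0
  then show ?case using summable_geometric[of x] by simp
next
  case (Suc N)
  show ?case
    using termdiff_converges[of x 1 "(diffs ^^ N) (\<lambda>_. 1::real)"] Suc by auto
qed

lemma poly_geom_summable:
  fixes x :: real
  assumes "0 \<le> x" "x < 1"
  shows "summable (\<lambda>n. real (Suc n) ^ N * x ^ n)"
proof (rule summable_comparison_test[OF _ diffs_one_summable[of x N]])
  show "\<exists>M. \<forall>n\<ge>M. norm (real (Suc n) ^ N * x ^ n) \<le> (diffs ^^ N) (\<lambda>_. 1) n * x ^ n"
    using assms diffs_one_bound by (auto intro!: mult_right_mono)
qed (use assms in auto)


definition wt :: "int list \<Rightarrow> nat list \<Rightarrow> real" where
  "wt ks ms = 1 / (\<Prod>i<length ks. real (ms ! i) powi (ks ! i))"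
definition Bm :: "int list \<Rightarrow> nat \<Rightarrow> nat list set" where
  "Bm ks m = {ms \<in> mpl_index (length ks). last ms = m}"
definition cc :: "int list \<Rightarrow> nat \<Rightarrow> real" where
  "cc ks m = (\<Sum>ms\<in>Bm ks m. wt ks ms)"
definition KK :: "int list \<Rightarrow> nat" where
  "KK ks = (\<Sum>i<length ks. nat \<bar>ks ! i\<bar>)"
definition NN :: "int list \<Rightarrow> nat" where
  "NN ks = length ks + KK ks"

lemma sorted_le_last:
  "sorted_wrt (<) (ms::nat list) \<Longrightarrow> x \<in> set ms \<Longrightarrow> x \<le> last ms"
proof (induction ms)
  case Nil then show ?case by simp
next
  case (Cons a ms)
  show ?case
  proof (cases "ms = []")
    case True then show ?thesis using Cons by simp
  next
    case False
    then have l: "last ms \<in> set ms" by simp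
    have "x \<le> last ms"
    proof (cases "x = a")
      case True then show ?thesis using Cons.prems l by (auto intro: less_imp_le)
    next
      case False then show ?thesis using Cons by auto
    qed
    then show ?thesis using False by simp
  qed
qed

lemma Bm_subset: "Bm ks m \<subseteq> {xs. set xs \<subseteq> {..m} \<and> length xs = length ks}"
  unfolding Bm_def mpl_index_def using sorted_le_last by fastforce

lemma Bm_finite: "finite (Bm ks m)"
  by (rule finite_subset[OF Bm_subset finite_lists_length_eq]) simp

lemma Bm_card: "card (Bm ks m) \<le> Suc m ^ length ks"
proof -
  have "card (Bm ks m) \<le> card {xs. set xs \<subseteq> {..m} \<and> length xs = length ks}"
    by (rule card_mono[OF finite_lists_length_eq Bm_subset]) simp
  then show ?thesis by (simp add: card_lists_length_eq)
qed

lemma powi_bound: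
  fixes p :: real
  assumes "1 \<le> p" "p \<le> q"
  shows "0 < 1 / (p powi k)" "1 / (p powi k) \<le> q ^ nat \<bar>k\<bar>"
proof -
  show "0 < 1 / (p powi k)" using assms by simp
  show "1 / (p powi k) \<le> q ^ nat \<bar>k\<bar>"
  proof (cases "k \<ge> 0")
    case True
    then obtain j where k: "k = int j" by (metis nonneg_int_cases)
    have "1 \<le> p ^ j" using assms by simp
    then have "1 / p ^ j \<le> 1" by simp
    also have "1 \<le> q ^ j" using assms by simp
    finally show ?thesis using k by (simp add: power_int_of_nat)
  next
    case False
    then obtain j where k: "k = - int j" by (metis linear nonpos_int_cases)
    have "1 / (p powi k) = p ^ j" using assms k by (simp add: power_int_minus power_int_of_nat divide_inverse)
    also have "\<dots> \<le> q ^ j" using assms by (intro power_mono) auto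
    finally show ?thesis using k by simp
  qed
qed

lemma wt_bound:
  assumes "ms \<in> Bm ks m"
  shows "\<bar>wt ks ms\<bar> \<le> real (Suc m) ^ KK ks"
proof -
  have ms: "length ms = length ks" "sorted_wrt (<) ms" "\<forall>x\<in>set ms. 0 < x" "last ms = m"
    using assms unfolding Bm_def mpl_index_def by auto
  have el: "1 \<le> real (ms ! i) \<and> real (ms ! i) \<le> real (Suc m)" if "i < length ks" for i
  proof -
    have "ms ! i \<in> set ms" using that ms by simp
    then show ?thesis using ms sorted_le_last[of ms "ms ! i"] by fastforce
  qed
  have "\<bar>wt ks ms\<bar> = \<bar>\<Prod>i<length ks. 1 / (real (ms ! i) powi (ks ! i))\<bar>"
    unfolding wt_def by (simp add: prod_dividef)
  also have "\<dots> = (\<Prod>i<length ks. 1 / (real (ms ! i) powi (ks ! i)))"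
    using el powi_bound(1) by (intro abs_of_nonneg prod_nonneg) (auto intro: less_imp_le)
  also have "\<dots> \<le> (\<Prod>i<length ks. real (Suc m) ^ nat \<bar>ks ! i\<bar>)"
    using el powi_bound by (intro prod_mono) (auto intro: less_imp_le)
  also have "\<dots> = real (Suc m) ^ KK ks" unfolding KK_def by (simp add: power_sum)
  finally show ?thesis .
qed

lemma abs_wt_sum_bound: "(\<Sum>ms\<in>Bm ks m. \<bar>wt ks ms\<bar>) \<le> real (Suc m) ^ NN ks"
proof -
  have "(\<Sum>ms\<in>Bm ks m. \<bar>wt ks ms\<bar>) \<le> (\<Sum>ms\<in>Bm ks m. real (Suc m) ^ KK ks)"
    by (intro sum_mono wt_bound)
  also have "\<dots> = real (card (Bm ks m)) * real (Suc m) ^ KK ks" by simp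
  also have "\<dots> \<le> real (Suc m ^ length ks) * real (Suc m) ^ KK ks"
    using Bm_card[of ks m] by (intro mult_right_mono) (simp_all only: of_nat_le_iff, simp)
  also have "\<dots> = real (Suc m) ^ NN ks" unfolding NN_def by (simp add: power_add)
  finally show ?thesis .
qed

lemma cc_bound: "\<bar>cc ks m\<bar> \<le> real (Suc m) ^ NN ks"
  unfolding cc_def using abs_wt_sum_bound[of ks m] sum_abs[of "wt ks" "Bm ks m"] by linarith


lemma polylog_series:
  fixes x :: real
  assumes x: "\<bar>x\<bar> < 1"
  shows "(\<lambda>m. cc ks m * x ^ m) sums multi_polylog ks x"
proof -
  define A where "A = mpl_index (length ks)"
  define f where "f = (\<lambda>ms. x ^ last ms / (\<Prod>i<length ks. real (ms ! i) powi (ks ! i)))"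
  define g where "g = (\<lambda>m. real (Suc m) ^ NN ks * \<bar>x\<bar> ^ m)"
  have gs: "summable g" unfolding g_def using poly_geom_summable[of "\<bar>x\<bar>"] x by simp
  have g0: "0 \<le> g m" for m unfolding g_def by simp
  have fB: "ms \<in> Bm ks m \<Longrightarrow> f ms = x ^ m * wt ks ms" for ms m
    unfolding f_def wt_def Bm_def by simp
  have sumB: "(\<Sum>ms\<in>Bm ks m. norm (f ms)) \<le> g m" for m
  proof -
    have "(\<Sum>ms\<in>Bm ks m. norm (f ms)) = \<bar>x\<bar> ^ m * (\<Sum>ms\<in>Bm ks m. \<bar>wt ks ms\<bar>)"
      by (simp add: fB sum_distrib_left abs_mult power_abs)
    also have "\<dots> \<le> \<bar>x\<bar> ^ m * real (Suc m) ^ NN ks"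
      by (intro mult_left_mono abs_wt_sum_bound) auto
    finally show ?thesis unfolding g_def by (simp add: mult.commute)
  qed
  have abs: "(\<lambda>ms. norm (f ms)) summable_on A"
  proof (rule nonneg_bdd_above_summable_on)
    show "bdd_above (sum (\<lambda>ms. norm (f ms)) ` {F. F \<subseteq> A \<and> finite F})"
    proof (rule bdd_aboveI2)
      fix F assume F: "F \<in> {F. F \<subseteq> A \<and> finite F}"
      have "sum (\<lambda>ms. norm (f ms)) F = (\<Sum>m\<in>last ` F. \<Sum>ms\<in>{ms\<in>F. last ms = m}. norm (f ms))"
        using F by (simp add: sum.image_gen)
      also have "\<dots> \<le> (\<Sum>m\<in>last ` F. \<Sum>ms\<in>Bm ks m. norm (f ms))"
        using F by (intro sum_mono sum_mono2 Bm_finite) (auto simp: Bm_def A_def)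
      also have "\<dots> \<le> (\<Sum>m\<in>last ` F. g m)" by (intro sum_mono sumB)
      also have "\<dots> \<le> suminf g" using F gs g0 by (intro sum_le_suminf) auto
      finally show "sum (\<lambda>ms. norm (f ms)) F \<le> suminf g" .
    qed
  qed simp
  have fs: "f summable_on A" using abs abs_summable_summable by blast
  define h where "h = (\<lambda>ms::nat list. (last ms, ms))"
  have inj: "inj_on h A" unfolding h_def by (auto intro: inj_onI)
  have hA: "h ` A = Sigma UNIV (Bm ks)" unfolding h_def A_def Bm_def by auto
  define f' where "f' = (\<lambda>p::nat \<times> nat list. f (snd p))"
  have "f' \<circ> h = f" unfolding f'_def h_def by auto
  then have "f' summable_on Sigma UNIV (Bm ks)"
    using summable_on_reindex[OF inj, of f'] fs hA by simp
  then have hs: "(f' has_sum infsum f' (Sigma UNIV (Bm ks))) (Sigma UNIV (Bm ks))"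
    by (rule has_sum_infsum)
  have eqinf: "infsum f' (Sigma UNIV (Bm ks)) = infsum f A"
    using infsum_reindex[OF inj, of f'] hA \<open>f' \<circ> h = f\<close> by simp
  have "((\<lambda>m. sum f (Bm ks m)) has_sum infsum f A) UNIV"
    using has_sum_SigmaD[OF hs, of "\<lambda>m. sum f (Bm ks m)"] eqinf
    by (simp add: f'_def has_sum_finite Bm_finite)
  then have "(\<lambda>m. sum f (Bm ks m)) sums infsum f A" by (rule has_sum_imp_sums)
  moreover have "sum f (Bm ks m) = cc ks m * x ^ m" for m
    unfolding cc_def by (simp add: fB sum_distrib_left mult.commute)
  moreover have "infsum f A = multi_polylog ks x"
    unfolding multi_polylog_def f_def A_def by simp
  ultimately show ?thesis by simp
qed


definition Lc :: "int list \<Rightarrow> complex \<Rightarrow> complex" where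
  "Lc ks z = (\<Sum>m. complex_of_real (cc ks m) * z ^ m)"

lemma Lc_summable:
  assumes "norm (z::complex) < 1"
  shows "summable (\<lambda>m. complex_of_real (cc ks m) * z ^ m)"
proof (rule summable_comparison_test[OF _ poly_geom_summable[of "norm z" "NN ks"]])
  show "\<exists>M. \<forall>n\<ge>M. norm (complex_of_real (cc ks n) * z ^ n) \<le> real (Suc n) ^ NN ks * norm z ^ n"
    using cc_bound by (auto simp: norm_mult norm_power intro!: mult_right_mono)
qed (use assms in auto)

lemma Lc_holo: "Lc ks holomorphic_on ball 0 1"
proof -
  have "\<forall>z\<in>ball 0 1. \<exists>f'. (Lc ks has_field_derivative f') (at z)"
  proof
    fix z :: complex assume "z \<in> ball 0 1"
    then have "norm z < 1" by simp
    then show "\<exists>f'. (Lc ks has_field_derivative f') (at z)"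
      unfolding Lc_def[abs_def] using termdiffs_strong'[of 1 "\<lambda>m. complex_of_real (cc ks m)" z] Lc_summable
      by blast
  qed
  then show ?thesis by (simp add: holomorphic_on_open)
qed

lemma Lc_real:
  assumes "\<bar>x\<bar> < 1"
  shows "Lc ks (complex_of_real x) = complex_of_real (multi_polylog ks x)"
proof -
  have "(\<lambda>m. complex_of_real (cc ks m * x ^ m)) sums complex_of_real (multi_polylog ks x)"
    by (subst sums_of_real_iff) (rule polylog_series[OF assms])
  then show ?thesis unfolding Lc_def by (simp add: sums_iff)
qed

definition S0 :: "complex set" where
  "S0 = {z. norm (1 - exp (-z)) < 1} \<inter> {z. 1 + exp z \<noteq> 0}"

lemma S0_open: "open S0"
  unfolding S0_def
  by (intro open_Int open_Collect_less open_Collect_neq) (auto intro!: continuous_intros)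

lemma S0_0: "0 \<in> S0" unfolding S0_def by simp

definition Gc :: "int list \<Rightarrow> complex \<Rightarrow> complex" where
  "Gc ks z = 2 * Lc ks (1 - exp (-z)) / (1 + exp z) ^ length ks"

lemma Gc_holo: "Gc ks holomorphic_on S0"
proof -
  have "(Lc ks \<circ> (\<lambda>z. 1 - exp (-z))) holomorphic_on S0"
    by (rule holomorphic_on_compose_gen[OF _ Lc_holo]) (auto simp: S0_def intro!: holomorphic_intros)
  then have "(\<lambda>z. Lc ks (1 - exp (-z))) holomorphic_on S0" by (simp add: o_def)
  then show ?thesis unfolding Gc_def[abs_def]
    by (intro holomorphic_intros) (auto simp: S0_def)
qed

definition Gr :: "int list \<Rightarrow> real \<Rightarrow> real" where
  "Gr ks s = 2 * multi_polylog ks (1 - exp (- s)) / (1 + exp s) ^ length ks"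

lemma Gc_real:
  assumes "complex_of_real s \<in> S0"
  shows "Gc ks (complex_of_real s) = complex_of_real (Gr ks s)"
proof -
  have e: "1 - exp (- complex_of_real s) = complex_of_real (1 - exp (-s))"
    by (simp flip: exp_of_real)
  moreover have "\<bar>1 - exp (-s)\<bar> < 1"
  proof -
    have "cmod (1 - exp (- complex_of_real s)) < 1" using assms unfolding S0_def by simp
    then have "cmod (complex_of_real (1 - exp (-s))) < 1" by (simp only: e)
    then show ?thesis by (simp only: norm_of_real)
  qed
  ultimately show ?thesis unfolding Gc_def Gr_def
    by (simp only: Lc_real) (simp flip: exp_of_real)
qed

lemma re_higher_deriv:
  assumes g: "g holomorphic_on S" and S: "open S" and U: "open U"
    and US: "\<And>x. x \<in> U \<Longrightarrow> complex_of_real x \<in> S"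
    and fg: "\<And>x. x \<in> U \<Longrightarrow> f x = Re (g (complex_of_real x))"
    and x: "x \<in> U"
  shows "(deriv ^^ n) f x = Re ((deriv ^^ n) g (complex_of_real x))"
  using x
proof (induction n arbitrary: x)
  case 0 then show ?case using fg by simp
next
  case (Suc n)
  have h: "(deriv ^^ n) g holomorphic_on S" using g S by (rule holomorphic_higher_deriv)
  have d: "((\<lambda>y. Re ((deriv ^^ n) g (complex_of_real y))) has_field_derivative
            Re (deriv ((deriv ^^ n) g) (complex_of_real y))) (at y)" if "y \<in> U" for y
    by (intro has_field_derivative_Re has_vector_derivative_real_field holomorphic_derivI[OF h S US[OF that]])
  have "((deriv ^^ n) f has_field_derivative Re (deriv ((deriv ^^ n) g) (complex_of_real x))) (at x)"
    by (rule has_field_derivative_transform_within_open[OF d[OF Suc.prems] U Suc.prems])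
       (use Suc.IH in simp)
  then show ?case by (simp add: DERIV_imp_deriv)
qed

lemma higher_deriv_exp_lin: "(deriv ^^ n) (\<lambda>z. exp (k * z)) (0::complex) = k ^ n"
proof -
  have e: "(deriv ^^ n) exp = (exp :: complex \<Rightarrow> complex)" for n
  proof (induction n)
    case (Suc n)
    have "deriv exp = (exp :: complex \<Rightarrow> complex)"
      by (intro ext DERIV_imp_deriv DERIV_exp)
    then show ?case using Suc by simp
  qed simp
  have "(deriv ^^ n) (\<lambda>z. exp (k * z)) (0::complex) = k ^ n * (deriv ^^ n) exp (k * 0)"
    by (rule higher_deriv_compose_linear[where S=UNIV and T=UNIV]) (auto intro: holomorphic_intros)
  then show ?thesis using e by simp
qed


lemma aux_div:
  fixes X E Y M :: real
  assumes "X * E = 1" "Y \<noteq> 0"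
  shows "M / (X * Y) * 1 = M / Y * E"
proof -
  have X: "X \<noteq> 0" using assms by auto
  have "M / (X * Y) = M * (X * E) / (X * Y)" using assms by simp
  also have "\<dots> = M / Y * E" using X assms by (simp add: field_simps)
  finally show ?thesis by simp
qed

lemma F_eq:
  fixes a b t :: real
  assumes "a > 0" "b > 0"
  shows "2 * multi_polylog ks (1 - (a * b) powr (- t)) / (a powr (- t) + b powr t) ^ length ks
           * exp (real (length ks) * 0 * t)
         = Gr ks ((ln a + ln b) * t) * exp (real (length ks) * ln a * t)"
proof -
  define r where "r = length ks"
  have p1: "(a*b) powr (-t) = exp (- ((ln a + ln b) * t))" using assms by (simp add: powr_def ln_mult)
  have p2: "a powr (-t) + b powr t = exp (- (ln a * t)) * (1 + exp ((ln a + ln b) * t))"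
    using assms by (simp add: powr_def algebra_simps flip: exp_add)
  have p3: "exp (- (ln a * t)) ^ r * exp (real r * ln a * t) = 1"
    by (simp add: exp_of_nat_mult mult.assoc flip: power_mult_distrib exp_add)
  have pos: "exp (- (ln a * t)) ^ r > 0" "(1 + exp ((ln a + ln b) * t)) ^ r > 0"
    by (simp, intro zero_less_power add_pos_pos) auto
  have "real r * 0 * t = 0" by simp
  show ?thesis unfolding Gr_def r_def[symmetric] p1 p2 power_mult_distrib \<open>real r * 0 * t = 0\<close> exp_zero
    using aux_div[OF p3, of "(1 + exp ((ln a + ln b) * t)) ^ r" "2 * multi_polylog ks (1 - exp (- ((ln a + ln b) * t)))"] pos
    by (simp only: mult_1_right)
qed

theorem theorem2:
  fixes ks :: "int list" and a b :: real and n :: nat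
  assumes "length ks \<ge> 1" and "a > 0" and "b > 0" and "a * b \<noteq> 1" and "a * b \<noteq> -1"
  shows "gen_multi_poly_euler ks n a b =
    (\<Sum>i=0..n. real (n choose i) * real (length ks) ^ (n - i) * (ln a + ln b) ^ i
               * (ln a) ^ (n - i) * multi_poly_euler ks i)"
proof -
  define r where "r = length ks"
  define c where "c = ln a + ln b"
  define k where "k = real r * ln a"
  define Fc where "Fc = (\<lambda>z. Gc ks (complex_of_real c * z) * exp (complex_of_real k * z))"
  define T where "T = (\<lambda>z. complex_of_real c * z) -` S0"
  have T: "open T" unfolding T_def by (intro open_vimage S0_open) (auto intro!: continuous_intros)
  have T0: "0 \<in> T" unfolding T_def using S0_0 by simp
  have GcT: "(\<lambda>z. Gc ks (complex_of_real c * z)) holomorphic_on T"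
  proof -
    have "(Gc ks \<circ> (\<lambda>z. complex_of_real c * z)) holomorphic_on T"
      by (rule holomorphic_on_compose_gen[OF _ Gc_holo]) (auto simp: T_def intro!: holomorphic_intros)
    then show ?thesis by (simp add: o_def)
  qed
  have expT: "(\<lambda>z. exp (complex_of_real k * z)) holomorphic_on T" by (intro holomorphic_intros)
  have FcT: "Fc holomorphic_on T" unfolding Fc_def using GcT expT by (rule holomorphic_on_mult)
  define F where "F = (\<lambda>t. 2 * multi_polylog ks (1 - (a * b) powr (- t))
                        / (a powr (- t) + b powr t) ^ length ks
                        * exp (real (length ks) * 0 * t))"
  define U1 where "U1 = complex_of_real -` T"
  have U1: "open U1" unfolding U1_def by (intro open_vimage T) (auto intro!: continuous_intros)
  have FRe: "F t = Re (Fc (complex_of_real t))" if "t \<in> U1" for t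
  proof -
    have "complex_of_real (c * t) \<in> S0" using that unfolding U1_def T_def by simp
    then have "Gc ks (complex_of_real (c * t)) = complex_of_real (Gr ks (c * t))" by (rule Gc_real)
    then have "Fc (complex_of_real t) = complex_of_real (Gr ks (c * t) * exp (k * t))"
      unfolding Fc_def by (simp flip: exp_of_real)
    then show ?thesis unfolding F_def using F_eq[OF assms(2,3), of ks t]
      by (simp add: c_def k_def r_def)
  qed
  have gen: "gen_multi_poly_euler ks n a b = Re ((deriv ^^ n) Fc 0)"
  proof -
    have "gen_multi_poly_euler ks n a b = (deriv ^^ n) F 0"
      unfolding gen_multi_poly_euler_def gen_multi_poly_euler_poly_def F_def by simp
    also have "\<dots> = Re ((deriv ^^ n) Fc (complex_of_real 0))"
      by (rule re_higher_deriv[OF FcT T U1 _ FRe]) (use T0 in \<open>auto simp: U1_def\<close>)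
    finally show ?thesis by simp
  qed
  define U0 where "U0 = complex_of_real -` S0"
  have U0: "open U0" unfolding U0_def by (intro open_vimage S0_open) (auto intro!: continuous_intros)
  have E: "multi_poly_euler ks i = Re ((deriv ^^ i) (Gc ks) 0)" for i
  proof -
    define G where "G = (\<lambda>t. 2 * multi_polylog ks (1 - exp (- t)) / (1 + exp t) ^ length ks
                        * exp (real (length ks) * 0 * t))"
    have GRe: "G t = Re (Gc ks (complex_of_real t))" if "t \<in> U0" for t
      using Gc_real[of t ks] that unfolding U0_def G_def Gr_def by simp
    have "multi_poly_euler ks i = (deriv ^^ i) G 0"
      unfolding multi_poly_euler_def multi_poly_euler_poly_def G_def by simp
    also have "\<dots> = Re ((deriv ^^ i) (Gc ks) (complex_of_real 0))"
      by (rule re_higher_deriv[OF Gc_holo S0_open U0 _ GRe]) (use S0_0 in \<open>auto simp: U0_def\<close>)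
    finally show ?thesis by simp
  qed
  have "(deriv ^^ n) Fc 0 = (\<Sum>i=0..n. of_nat (n choose i) *
           (deriv ^^ i) (\<lambda>z. Gc ks (complex_of_real c * z)) 0 *
           (deriv ^^ (n - i)) (\<lambda>z. exp (complex_of_real k * z)) 0)"
    unfolding Fc_def by (rule higher_deriv_mult[OF GcT expT T T0])
  also have "\<dots> = (\<Sum>i=0..n. complex_of_real (real (n choose i) * c ^ i * k ^ (n - i)) *
                    (deriv ^^ i) (Gc ks) 0)"
  proof (rule sum.cong[OF refl])
    fix i
    have "(deriv ^^ i) (\<lambda>z. Gc ks (complex_of_real c * z)) 0 = complex_of_real c ^ i * (deriv ^^ i) (Gc ks) (complex_of_real c * 0)"
      by (rule higher_deriv_compose_linear[OF Gc_holo T S0_open T0]) (auto simp: T_def)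
    then show "of_nat (n choose i) * (deriv ^^ i) (\<lambda>z. Gc ks (complex_of_real c * z)) 0 *
           (deriv ^^ (n - i)) (\<lambda>z. exp (complex_of_real k * z)) 0 =
          complex_of_real (real (n choose i) * c ^ i * k ^ (n - i)) * (deriv ^^ i) (Gc ks) 0"
      by (simp add: higher_deriv_exp_lin)
  qed
  finally have "Re ((deriv ^^ n) Fc 0) = (\<Sum>i=0..n. real (n choose i) * c ^ i * k ^ (n - i) * multi_poly_euler ks i)"
    by (simp add: E)
  then show ?thesis unfolding gen
    by (simp add: c_def k_def r_def power_mult_distrib mult_ac)
qed

end
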